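(* Consider the following optical-network model. Each link $k$ has a set $A_k\subseteq\mathbb{Z}$ of available units. Each trait $t$ has a resource $\mathrm{RI}(t)$, a nonempty integer interval, and for each link $k$ the set $t\oplus k$ of derived traits satisfies: every $t'\in t\oplus k$ has $\mathrm{RI}(t')$ a maximal integer interval contained in $\mathrm{RI}(t)\cap A_k$, and for every maximal integer interval $J\subseteq \mathrm{RI}(t)\cap A_k$ there is $t'\in t\oplus k$ with $\mathrm{RI}(t')=J$. Fix a link $k$ leaving a node $n$, and for a label $l=(t_1,t_2)$ whose both routes end at $n$ let $l\oplus e=\{(t,t_2): t\in t_1\oplus k\}\cup\{(t,t_1): t\in t_2\oplus k\}$ (the link may be appended to either route; afterwards the routes end at different nodes). Let $\mathrm{cost}$ be a real-valued function on labels such that for any labels $l_i,l_j$: if $\mathrm{cost}(l_i)\le\mathrm{cost}(l_j)$ then $\mathrm{cost}(l')\le\mathrm{cost}(l)$ for all $l'\in l_i\oplus e$ and all $l\in l_j\oplus e$. Let $l_i=(t_i,t'_i)$, $l_j=(t_j,t'_j)$ be labels whose routes all end at $n$. If $l_i\preceq'_{=} l_j$, then for every $l\in l_j\oplus e$ there exists $l'\in l_i\oplus e$ with $l'\preceq'_{\ne} l$.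
   Context: A trait describes a route in an optical network with its cost and the interval of contiguous units available along it; a label is a pair of traits of two link-disjoint routes. For labels $l_i=(t_i,t'_i)$, $l_j=(t_j,t'_j)$ with both routes ending at the same node: $\mathrm{RI}(l_i)\supseteq_n\mathrm{RI}(l_j)$ iff $\mathrm{RI}(t_i)\supseteq\mathrm{RI}(t_j)$ and $\mathrm{RI}(t'_i)\supseteq\mathrm{RI}(t'_j)$; $\mathrm{RI}(l_i)\supseteq_x\mathrm{RI}(l_j)$ iff $\mathrm{RI}(t_i)\supseteq\mathrm{RI}(t'_j)$ and $\mathrm{RI}(t'_i)\supseteq\mathrm{RI}(t_j)$; $l_i\preceq'_= l_j$ iff $\mathrm{cost}(l_i)\le\mathrm{cost}(l_j)$ and ($\mathrm{RI}(l_i)\supseteq_n\mathrm{RI}(l_j)$ or $\mathrm{RI}(l_i)\supseteq_x\mathrm{RI}(l_j)$). For labels $(a,b),(c,d)$ with routes ending at different nodes: $(a,b)\preceq'_{\ne}(c,d)$ iff $\mathrm{cost}((a,b))\le\mathrm{cost}((c,d))$, $\mathrm{RI}(a)\supseteq\mathrm{RI}(c)$ and $\mathrm{RI}(b)\supseteq\mathrm{RI}(d)$. *)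

theory Defs
  imports Complex_Main
begin

definition int_interval :: "int set \<Rightarrow> bool" where
  "int_interval S \<longleftrightarrow> (\<exists>a b. a \<le> b \<and> S = {a..b})"

definition max_int_interval :: "int set \<Rightarrow> int set \<Rightarrow> bool" where
  "max_int_interval J S \<longleftrightarrow> int_interval J \<and> J \<subseteq> S \<and>
     (\<forall>J'. int_interval J' \<and> J \<subseteq> J' \<and> J' \<subseteq> S \<longrightarrow> J' = J)"

definition label_ext :: "('t \<Rightarrow> 'k \<Rightarrow> 't set) \<Rightarrow> 'k \<Rightarrow> 't \<times> 't \<Rightarrow> ('t \<times> 't) set" where
  "label_ext ext k l = {(t, snd l) | t. t \<in> ext (fst l) k} \<union> {(t, fst l) | t. t \<in> ext (snd l) k}"

text \<open>Relation on labels whose routes all end at the same node.\<close>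
definition prec_eq :: "('t \<Rightarrow> int set) \<Rightarrow> ('t \<times> 't \<Rightarrow> real) \<Rightarrow> 't \<times> 't \<Rightarrow> 't \<times> 't \<Rightarrow> bool" where
  "prec_eq RI cost li lj \<longleftrightarrow> cost li \<le> cost lj \<and>
     ((RI (fst lj) \<subseteq> RI (fst li) \<and> RI (snd lj) \<subseteq> RI (snd li)) \<or>
      (RI (snd lj) \<subseteq> RI (fst li) \<and> RI (fst lj) \<subseteq> RI (snd li)))"

text \<open>Relation on labels whose routes end at different nodes.\<close>
definition prec_ne :: "('t \<Rightarrow> int set) \<Rightarrow> ('t \<times> 't \<Rightarrow> real) \<Rightarrow> 't \<times> 't \<Rightarrow> 't \<times> 't \<Rightarrow> bool" where
  "prec_ne RI cost l1 l2 \<longleftrightarrow> cost l1 \<le> cost l2 \<and>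
     RI (fst l2) \<subseteq> RI (fst l1) \<and> RI (snd l2) \<subseteq> RI (snd l1)"

end

theory Submission
  imports Defs
begin

lemma exists_max:
  assumes "int_interval I" "I \<subseteq> S" "finite S"
  shows "\<exists>J. max_int_interval J S \<and> I \<subseteq> J"
proof -
  let ?C = "{J. int_interval J \<and> I \<subseteq> J \<and> J \<subseteq> S}"
  have fin: "finite ?C" by (rule finite_subset[of _ "Pow S"]) (auto simp: assms(3))
  have ne: "I \<in> ?C" using assms by auto
  obtain J where J: "J \<in> ?C" "\<forall>J'\<in>?C. card J' \<le> card J"
    using ex_has_greatest_nat[of "\<lambda>J. J \<in> ?C" I card "Suc (card S)"] ne
    using assms(3) card_mono by (metis (no_types, lifting) le_imp_less_Suc mem_Collect_eq)
  have "max_int_interval J S"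
    unfolding max_int_interval_def
  proof (intro conjI allI impI)
    fix J' assume h: "int_interval J' \<and> J \<subseteq> J' \<and> J' \<subseteq> S"
    then have "J' \<in> ?C" using J by auto
    then have "card J' \<le> card J" using J by auto
    moreover have "finite J'" using h assms(3) finite_subset by blast
    ultimately show "J' = J" using h card_subset_eq by (metis antisym card_mono)
  qed (use J in auto)
  then show ?thesis using J by auto
qed

lemma key:
  assumes RI_int: "\<And>t. int_interval (RI t)"
    and ext_max: "\<And>t k' t'. t' \<in> ext t k' \<Longrightarrow> max_int_interval (RI t') (RI t \<inter> A k')"
    and ext_all: "\<And>t k' J. max_int_interval J (RI t \<inter> A k') \<Longrightarrow> \<exists>t'\<in>ext t k'. RI t' = J"
    and sub: "RI t \<subseteq> RI s" and t': "t' \<in> ext t k"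
  shows "\<exists>s'\<in>ext s k. RI t' \<subseteq> RI s'"
proof -
  have m: "max_int_interval (RI t') (RI t \<inter> A k)" using ext_max t' by blast
  have "finite (RI s \<inter> A k)" using RI_int[of s] unfolding int_interval_def by auto
  moreover have "RI t' \<subseteq> RI s \<inter> A k" using m sub unfolding max_int_interval_def by auto
  ultimately obtain J where "max_int_interval J (RI s \<inter> A k)" "RI t' \<subseteq> J"
    using exists_max[of "RI t'"] RI_int by blast
  then show ?thesis using ext_all by blast
qed

theorem proposition6:
  fixes A :: "'k \<Rightarrow> int set"
    and RI :: "'t \<Rightarrow> int set"
    and ext :: "'t \<Rightarrow> 'k \<Rightarrow> 't set"
    and cost :: "'t \<times> 't \<Rightarrow> real"
    and k :: 'k
    and li lj :: "'t \<times> 't"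
  assumes RI_int: "\<And>t. int_interval (RI t)"
    and ext_max: "\<And>t k' t'. t' \<in> ext t k' \<Longrightarrow> max_int_interval (RI t') (RI t \<inter> A k')"
    and ext_all: "\<And>t k' J. max_int_interval J (RI t \<inter> A k') \<Longrightarrow> \<exists>t'\<in>ext t k'. RI t' = J"
    and cost_mono: "\<And>l1 l2. cost l1 \<le> cost l2 \<Longrightarrow>
        (\<forall>l'\<in>label_ext ext k l1. \<forall>l\<in>label_ext ext k l2. cost l' \<le> cost l)"
    and dom: "prec_eq RI cost li lj"
  shows "\<forall>l\<in>label_ext ext k lj. \<exists>l'\<in>label_ext ext k li. prec_ne RI cost l' l"
proof
  fix l assume l: "l \<in> label_ext ext k lj"
  note K = key[of RI ext A, OF RI_int ext_max ext_all]
  have c: "cost li \<le> cost lj" using dom unfolding prec_eq_def by auto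
  have C: "\<And>l'. l' \<in> label_ext ext k li \<Longrightarrow> cost l' \<le> cost l" using cost_mono[OF c] l by blast
  obtain a b where li_: "li = (a, b)" by fastforce
  obtain c d where lj_: "lj = (c, d)" by fastforce
  have D: "(RI c \<subseteq> RI a \<and> RI d \<subseteq> RI b) \<or> (RI d \<subseteq> RI a \<and> RI c \<subseteq> RI b)"
    using dom unfolding prec_eq_def li_ lj_ by auto
  have E: "\<And>x y. x \<in> ext a k \<Longrightarrow> (x, b) \<in> label_ext ext k li"
          "\<And>x y. x \<in> ext b k \<Longrightarrow> (x, a) \<in> label_ext ext k li"
    unfolding label_ext_def li_ by auto
  from l consider (L) t where "l = (t, d)" "t \<in> ext c k" | (R) t where "l = (t, c)" "t \<in> ext d k"
    unfolding label_ext_def lj_ by auto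
  then show "\<exists>l'\<in>label_ext ext k li. prec_ne RI cost l' l"
  proof cases
    case L
    from D show ?thesis
    proof
      assume h: "RI c \<subseteq> RI a \<and> RI d \<subseteq> RI b"
      then obtain s where "s \<in> ext a k" "RI t \<subseteq> RI s" using K[of c a t k] L by blast
      then show ?thesis using E(1) C h L unfolding prec_ne_def by fastforce
    next
      assume h: "RI d \<subseteq> RI a \<and> RI c \<subseteq> RI b"
      then obtain s where "s \<in> ext b k" "RI t \<subseteq> RI s" using K[of c b t k] L by blast
      then show ?thesis using E(2) C h L unfolding prec_ne_def by fastforce
    qed
  next
    case R
    from D show ?thesis
    proof
      assume h: "RI c \<subseteq> RI a \<and> RI d \<subseteq> RI b"
      then obtain s where "s \<in> ext b k" "RI t \<subseteq> RI s" using K[of d b t k] R by blast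
      then show ?thesis using E(2) C h R unfolding prec_ne_def by fastforce
    next
      assume h: "RI d \<subseteq> RI a \<and> RI c \<subseteq> RI b"
      then obtain s where "s \<in> ext a k" "RI t \<subseteq> RI s" using K[of d a t k] R by blast
      then show ?thesis using E(1) C h R unfolding prec_ne_def by fastforce
    qed
  qed
qed

end
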